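(* Let $\mathcal H$ be a complex Hilbert space, $T\in\mathcal B(\mathcal H)$ left-invertible, and $L\in\mathcal B(\mathcal H)$ a left-inverse of $T$ (i.e. $LT=I$). Let $\phi(z)=1/z$ on $\mathbb C\setminus\{0\}$, extended to the Riemann sphere by $\phi(0)=\infty$, $\phi(\infty)=0$. Then, if $0\in\sigma(T)$, $$\mathbb C\setminus\phi(\sigma_l(L))\subseteq\sigma_r(T)\setminus\sigma_l(T),$$ while if $0\notin\sigma(T)$, then $\phi(\sigma(L))=\sigma(T)$. In either case $0\notin\partial\sigma(L)$ and $\phi(\partial\sigma(L))\subseteq\sigma_r(T)$.
   Context: $\sigma(A)$ is the spectrum of $A$; $\sigma_l(A)$ (left spectrum) is the set of $\lambda\in\mathbb C$ with $A-\lambda I$ not left-invertible, and $\sigma_r(A)$ (right spectrum) the set of $\lambda$ with $A-\lambda I$ not right-invertible. $\partial$ denotes topological boundary in $\mathbb C$. *)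

theory Defs
  imports "HOL-Analysis.Analysis"
begin

class complex_vector = real_vector +
  fixes scaleC :: "complex \<Rightarrow> 'a \<Rightarrow> 'a"
  assumes scaleC_scaleR: "scaleC (complex_of_real r) x = scaleR r x"
    and scaleC_add_right: "scaleC a (x + y) = scaleC a x + scaleC a y"
    and scaleC_add_left: "scaleC (a + b) x = scaleC a x + scaleC b x"
    and scaleC_scaleC: "scaleC a (scaleC b x) = scaleC (a * b) x"
    and scaleC_one: "scaleC 1 x = x"

class complex_normed_vector = complex_vector + real_normed_vector +
  assumes norm_scaleC: "norm (scaleC a x) = cmod a * norm x"

class complex_inner = complex_normed_vector +
  fixes cinner :: "'a \<Rightarrow> 'a \<Rightarrow> complex"
  assumes cinner_commute: "cinner x y = cnj (cinner y x)"
    and cinner_add_left: "cinner (x + y) z = cinner x z + cinner y z"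
    and cinner_scaleC_left: "cinner (scaleC r x) y = cnj r * cinner x y"
    and cinner_self_norm: "cinner x x = complex_of_real ((norm x)\<^sup>2)"

class chilbert_space = complex_inner + complete_space

definition bop :: "('a::chilbert_space \<Rightarrow> 'a) \<Rightarrow> bool" where
  "bop A \<longleftrightarrow> bounded_linear A \<and> (\<forall>c x. A (scaleC c x) = scaleC c (A x))"

definition left_invertible :: "('a::chilbert_space \<Rightarrow> 'a) \<Rightarrow> bool" where
  "left_invertible A \<longleftrightarrow> (\<exists>B. bop B \<and> B \<circ> A = id)"

definition right_invertible :: "('a::chilbert_space \<Rightarrow> 'a) \<Rightarrow> bool" where
  "right_invertible A \<longleftrightarrow> (\<exists>B. bop B \<and> A \<circ> B = id)"

definition op_invertible :: "('a::chilbert_space \<Rightarrow> 'a) \<Rightarrow> bool" where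
  "op_invertible A \<longleftrightarrow> (\<exists>B. bop B \<and> B \<circ> A = id \<and> A \<circ> B = id)"

definition shift_op :: "('a::chilbert_space \<Rightarrow> 'a) \<Rightarrow> complex \<Rightarrow> 'a \<Rightarrow> 'a" where
  "shift_op A c = (\<lambda>x. A x - scaleC c x)"

definition op_spectrum :: "('a::chilbert_space \<Rightarrow> 'a) \<Rightarrow> complex set" where
  "op_spectrum A = {c. \<not> op_invertible (shift_op A c)}"

definition left_spectrum :: "('a::chilbert_space \<Rightarrow> 'a) \<Rightarrow> complex set" where
  "left_spectrum A = {c. \<not> left_invertible (shift_op A c)}"

definition right_spectrum :: "('a::chilbert_space \<Rightarrow> 'a) \<Rightarrow> complex set" where
  "right_spectrum A = {c. \<not> right_invertible (shift_op A c)}"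

text \<open>Riemann sphere modelled as complex option, None = \<infinity>.\<close>
type_synonym riemann_sphere = "complex option"

fun phi :: "riemann_sphere \<Rightarrow> riemann_sphere" where
  "phi None = Some 0"
| "phi (Some z) = (if z = 0 then None else Some (1 / z))"

end

theory Submission
  imports Defs
begin

lemma sC0[simp]: "scaleC 0 x = 0"
  using scaleC_scaleR[of 0 x] by simp

lemma sC0r[simp]: "scaleC a 0 = 0"
proof -
  have "scaleC a (0+0) = scaleC a 0 + scaleC a 0" by (rule scaleC_add_right)
  thus ?thesis by simp
qed

lemma sC_minus_r: "scaleC a (- x) = - scaleC a x"
proof -
  have "scaleC a x + scaleC a (- x) = 0"
    using scaleC_add_right[of a x "-x"] by simp
  thus ?thesis by (simp add: add_eq_0_iff)
qed

lemma sC_diff_r: "scaleC a (x - y) = scaleC a x - scaleC a y"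
  using scaleC_add_right[of a x "-y"] sC_minus_r[of a y] by simp

lemma sC_minus_l: "scaleC (- a) x = - scaleC a x"
proof -
  have "scaleC a x + scaleC (- a) x = 0"
    using scaleC_add_left[of a "-a" x] by simp
  thus ?thesis by (simp add: add_eq_0_iff)
qed

lemma sC_diff_l: "scaleC (a - b) x = scaleC a x - scaleC b x"
  using scaleC_add_left[of a "-b" x] sC_minus_l[of b x] by simp

lemma comp_id_iff: "(B \<circ> A = id) = (\<forall>x. B (A x) = x)"
  by (auto simp: fun_eq_iff)

lemma bopD:
  assumes "bop A"
  shows "A (x + y) = A x + A y" "A (x - y) = A x - A y" "A (scaleC c x) = scaleC c (A x)"
    "A 0 = 0" "bounded_linear A"
  using assms unfolding bop_def
  by (auto simp: linear_simps bounded_linear.linear[THEN linear_add] bounded_linear.linear[THEN linear_diff] bounded_linear.linear[THEN linear_0])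

lemma bop_id: "bop (\<lambda>x. x)" "bop id"
  unfolding bop_def by (auto simp: bounded_linear_ident id_def)

lemma bop_comp: "bop A \<Longrightarrow> bop B \<Longrightarrow> bop (A \<circ> B)"
  unfolding bop_def by (auto simp: o_def intro: bounded_linear_compose)

lemma bop_comp': "bop A \<Longrightarrow> bop B \<Longrightarrow> bop (\<lambda>x. A (B x))"
  using bop_comp[of A B] by (simp add: o_def)

lemma scaleC_scaleR_comm: "scaleC c (r *\<^sub>R x) = r *\<^sub>R scaleC c x"
proof -
  have "scaleC c (r *\<^sub>R x) = scaleC c (scaleC (complex_of_real r) x)" by (simp add: scaleC_scaleR)
  also have "\<dots> = scaleC (complex_of_real r) (scaleC c x)" by (simp add: scaleC_scaleC mult.commute)
  finally show ?thesis by (simp add: scaleC_scaleR)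
qed

lemma bl_scale: "bounded_linear (\<lambda>x::'a::complex_normed_vector. scaleC c x)"
  apply (rule bounded_linear_intro[where K="cmod c"])
    apply (rule scaleC_add_right)
   apply (rule scaleC_scaleR_comm)
  apply (simp add: norm_scaleC mult.commute)
  done

lemma bop_scale: "bop (\<lambda>x. scaleC c x)"
  unfolding bop_def using bl_scale by (simp add: scaleC_scaleC mult.commute)

lemma bop_diff: "bop A \<Longrightarrow> bop B \<Longrightarrow> bop (\<lambda>x. A x - B x)"
  unfolding bop_def by (auto intro: bounded_linear_sub simp: sC_diff_r)

lemma bop_shift: "bop A \<Longrightarrow> bop (shift_op A c)"
  unfolding shift_op_def by (intro bop_diff bop_scale)

lemma shift0[simp]: "shift_op A 0 = A"
  by (simp add: shift_op_def fun_eq_iff)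

lemma inv_comp: "op_invertible A \<Longrightarrow> op_invertible B \<Longrightarrow> op_invertible (A \<circ> B)"
  unfolding op_invertible_def comp_id_iff
proof (elim exE conjE)
  fix A' B' assume h: "bop A'" "\<forall>x. A' (A x) = x" "\<forall>x. A (A' x) = x"
     "bop B'" "\<forall>x. B' (B x) = x" "\<forall>x. B (B' x) = x"
  show "\<exists>C. bop C \<and> (\<forall>x. C ((A \<circ> B) x) = x) \<and> (\<forall>x. (A \<circ> B) (C x) = x)"
    by (rule exI[of _ "B' \<circ> A'"]) (simp add: h bop_comp)
qed

lemma inv_scale: "c \<noteq> 0 \<Longrightarrow> op_invertible (\<lambda>x. scaleC c x)"
  unfolding op_invertible_def comp_id_iff
  by (rule exI[of _ "\<lambda>x. scaleC (1/c) x"]) (simp add: bop_scale scaleC_scaleC scaleC_one)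

lemma inv_two_sided: "bop C \<Longrightarrow> B \<circ> A = id \<Longrightarrow> A \<circ> C = id \<Longrightarrow> op_invertible A"
  unfolding op_invertible_def comp_id_iff
  by (rule exI[of _ C]) metis

lemma inv_right_inv: "bop R \<Longrightarrow> A \<circ> R = id \<Longrightarrow> op_invertible R \<Longrightarrow> op_invertible A"
proof -
  assume h: "bop R" "A \<circ> R = id" "op_invertible R"
  then obtain Q where "\<forall>x. Q (R x) = x" "\<forall>x. R (Q x) = x"
    unfolding op_invertible_def comp_id_iff by blast
  with h have "R \<circ> A = id" unfolding comp_id_iff by metis
  thus ?thesis using inv_two_sided h by blast
qed

lemma inv_left_inv: "bop L \<Longrightarrow> L \<circ> T = id \<Longrightarrow> op_invertible L \<Longrightarrow> op_invertible T"
proof -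
  assume h: "bop L" "L \<circ> T = id" "op_invertible L"
  then obtain Q where "\<forall>x. Q (L x) = x" "\<forall>x. L (Q x) = x"
    unfolding op_invertible_def comp_id_iff by blast
  with h have "T \<circ> L = id" unfolding comp_id_iff by metis
  thus ?thesis using inv_two_sided h by blast
qed


lemma bop_invertible_below:
  fixes E :: "'a::chilbert_space \<Rightarrow> 'a"
  assumes bE: "bop E" and m: "m > 0" and below: "\<And>y. m * norm y \<le> norm (E y)"
    and surj: "\<And>x. \<exists>y. E y = x"
  shows "op_invertible E"
proof -
  have inj: "a = b" if "E a = E b" for a b
  proof -
    have "E (a - b) = 0" using that bopD[OF bE] by simp
    hence "m * norm (a - b) \<le> 0" using below[of "a - b"] by simp
    hence "norm (a - b) \<le> 0" using m by (simp add: mult_le_0_iff)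
    thus ?thesis by simp
  qed
  define G where "G x = (SOME y. E y = x)" for x
  have EG: "E (G x) = x" for x unfolding G_def by (rule someI_ex[OF surj])
  have GE: "G (E y) = y" for y by (rule inj) (simp add: EG)
  have bG: "bop G"
    unfolding bop_def
  proof (intro conjI allI)
    show "bounded_linear G"
    proof (rule bounded_linear_intro[where K="1/m"])
      fix x y show "G (x + y) = G x + G y"
        by (rule inj) (simp add: EG bopD[OF bE])
    next
      fix r and x :: 'a show "G (r *\<^sub>R x) = r *\<^sub>R G x"
        by (rule inj) (simp add: EG bopD[OF bE] scaleC_scaleR[symmetric])
    next
      fix x :: 'a
      have "m * norm (G x) \<le> norm x" using below[of "G x"] by (simp add: EG)
      thus "norm (G x) \<le> norm x * (1 / m)" using m by (simp add: field_simps)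
    qed
  next
    fix c x show "G (scaleC c x) = scaleC c (G x)"
      by (rule inj) (simp add: EG bopD[OF bE])
  qed
  show ?thesis unfolding op_invertible_def comp_id_iff
    using bG EG GE by blast
qed

lemma neumann:
  fixes R :: "'a::chilbert_space \<Rightarrow> 'a"
  assumes bR: "bop R" and K: "K > 0" and nR: "\<And>x. norm (R x) \<le> K * norm x"
    and small: "cmod d * K < 1"
  shows "op_invertible (\<lambda>y. y - scaleC d (R y))"
proof -
  define q where "q = cmod d * K"
  have q0: "0 \<le> q" and q1: "q < 1" using K small by (auto simp: q_def)
  have nS: "norm (scaleC d (R y)) \<le> q * norm y" for y
  proof -
    have "norm (scaleC d (R y)) = cmod d * norm (R y)" by (rule norm_scaleC)
    also have "\<dots> \<le> cmod d * (K * norm y)" by (rule mult_left_mono[OF nR]) simp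
    finally show ?thesis by (simp add: q_def mult.assoc)
  qed
  have bE: "bop (\<lambda>y. y - scaleC d (R y))"
    by (intro bop_diff bop_id bop_comp'[OF bop_scale bR])
  show ?thesis
  proof (rule bop_invertible_below[OF bE, of "1 - q"])
    show "0 < 1 - q" using q1 by simp
  next
    fix y :: 'a
    have "norm y = norm ((y - scaleC d (R y)) + scaleC d (R y))" by simp
    also have "\<dots> \<le> norm (y - scaleC d (R y)) + norm (scaleC d (R y))" by (rule norm_triangle_ineq)
    finally show "(1 - q) * norm y \<le> norm (y - scaleC d (R y))" using nS[of y]
      by (simp add: algebra_simps)
  next
    fix x :: 'a
    have "\<exists>!y. x + scaleC d (R y) = y"
    proof (rule banach_fix_type[OF q0 q1], intro allI)
      fix a b :: 'a
      have "dist (x + scaleC d (R a)) (x + scaleC d (R b)) = norm (scaleC d (R (a - b)))"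
        by (simp add: dist_norm bopD[OF bR] sC_diff_r)
      also have "\<dots> \<le> q * dist a b" using nS[of "a - b"] by (simp add: dist_norm)
      finally show "dist (x + scaleC d (R a)) (x + scaleC d (R b)) \<le> q * dist a b" .
    qed
    then obtain y where "x + scaleC d (R y) = y" by blast
    hence "y - scaleC d (R y) = x" by (simp add: algebra_simps)
    thus "\<exists>y. y - scaleC d (R y) = x" by blast
  qed
qed

lemma right_inv_not_frontier:
  fixes L :: "'a::chilbert_space \<Rightarrow> 'a"
  assumes bL: "bop L" and ri: "right_invertible (shift_op L w)"
  shows "w \<notin> frontier (op_spectrum L)"
proof -
  obtain R where bR: "bop R" and AR: "shift_op L w \<circ> R = id"
    using ri unfolding right_invertible_def by blast
  have AR': "L (R x) - scaleC w (R x) = x" for x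
    using AR unfolding comp_id_iff shift_op_def by blast
  obtain K where K: "K > 0" and nR: "\<And>x. norm (R x) \<le> K * norm x"
    using bounded_linear.pos_bounded[OF bopD(5)[OF bR]] by (auto simp: mult.commute)
  have key: "w' \<in> op_spectrum L \<longleftrightarrow> w \<in> op_spectrum L" if "dist w' w < 1 / K" for w'
  proof -
    define d where "d = w' - w"
    have small: "cmod d * K < 1" using that K by (simp add: d_def dist_norm field_simps)
    have Einv: "op_invertible (\<lambda>y. y - scaleC d (R y))"
      by (rule neumann[OF bR K nR small])
    have E1: "shift_op L w' \<circ> R = (\<lambda>y. y - scaleC d (R y))"
    proof
      fix y
      have "(shift_op L w' \<circ> R) y = (L (R y) - scaleC w (R y)) - scaleC d (R y)"
        by (simp add: shift_op_def d_def sC_diff_l algebra_simps)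
      thus "(shift_op L w' \<circ> R) y = y - scaleC d (R y)" by (simp add: AR')
    qed
    show ?thesis
    proof
      assume "w' \<in> op_spectrum L"
      hence nI: "\<not> op_invertible (shift_op L w')" by (simp add: op_spectrum_def)
      show "w \<in> op_spectrum L"
      proof (rule ccontr)
        assume "w \<notin> op_spectrum L"
        hence "op_invertible (shift_op L w)" by (simp add: op_spectrum_def)
        then obtain V where "\<forall>x. V (shift_op L w x) = x"
          unfolding op_invertible_def comp_id_iff by blast
        hence RA: "\<forall>x. R (shift_op L w x) = x" using AR' unfolding shift_op_def by metis
        have "shift_op L w' = shift_op L w \<circ> (\<lambda>y. y - scaleC d (R y))"
        proof
          fix x
          have "(shift_op L w \<circ> (\<lambda>y. y - scaleC d (R y))) x
              = shift_op L w x - scaleC d (shift_op L w (R x))"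
            using bopD[OF bop_shift[OF bL]] by simp
          also have "\<dots> = shift_op L w x - scaleC d x"
            using AR' by (simp add: shift_op_def)
          finally show "shift_op L w' x = (shift_op L w \<circ> (\<lambda>y. y - scaleC d (R y))) x"
            by (simp add: shift_op_def d_def sC_diff_l algebra_simps)
        qed
        moreover have "op_invertible (shift_op L w \<circ> (\<lambda>y. y - scaleC d (R y)))"
          by (rule inv_comp[OF \<open>op_invertible (shift_op L w)\<close> Einv])
        ultimately show False using nI by simp
      qed
    next
      assume "w \<in> op_spectrum L"
      hence nI: "\<not> op_invertible (shift_op L w)" by (simp add: op_spectrum_def)
      show "w' \<in> op_spectrum L"
      proof (rule ccontr)
        assume "w' \<notin> op_spectrum L"
        hence I': "op_invertible (shift_op L w')" by (simp add: op_spectrum_def)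
        then obtain V where "\<forall>x. V (shift_op L w' x) = x"
          unfolding op_invertible_def comp_id_iff by blast
        have "op_invertible R"
        proof -
          obtain V where bV: "bop V" and V1: "\<forall>x. V (shift_op L w' x) = x" and V2: "\<forall>x. shift_op L w' (V x) = x"
            using I' unfolding op_invertible_def comp_id_iff by blast
          have "R = V \<circ> (shift_op L w' \<circ> R)" using V1 by (simp add: fun_eq_iff)
          also have "\<dots> = V \<circ> (\<lambda>y. y - scaleC d (R y))" by (simp add: E1)
          finally have "R = V \<circ> (\<lambda>y. y - scaleC d (R y))" .
          moreover have "op_invertible V"
            using bV V1 V2 unfolding op_invertible_def comp_id_iff
            by (intro exI[of _ "shift_op L w'"]) (simp add: bop_shift bL)
          ultimately show ?thesis using inv_comp[OF _ Einv] by metis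
        qed
        hence "op_invertible (shift_op L w)" by (rule inv_right_inv[OF bR AR])
        thus False using nI by simp
      qed
    qed
  qed
  show ?thesis
  proof
    assume fr: "w \<in> frontier (op_spectrum L)"
    have K1: "1 / K > 0" using K by simp
    show False
    proof (cases "w \<in> op_spectrum L")
      case True
      have "ball w (1/K) \<subseteq> op_spectrum L" using key True by (auto simp: dist_commute)
      hence "w \<in> interior (op_spectrum L)" using K1 mem_interior by blast
      thus False using fr by (simp add: frontier_def)
    next
      case False
      have "w \<in> closure (op_spectrum L)" using fr by (simp add: frontier_def)
      then obtain y where "y \<in> op_spectrum L" "dist y w < 1/K"
        using closure_approachable K1 by blast
      thus False using key False by blast
    qed
  qed
qed


lemma sc_lemma:
  assumes "w \<noteq> 0"
  shows "scaleC (-w) (x - scaleC (1/w) y) = y - scaleC w (x::'a::complex_vector)"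
proof -
  have "scaleC (-w) (x - scaleC (1/w) y) = scaleC (-w) x - scaleC ((-w) * (1/w)) y"
    by (simp add: sC_diff_r scaleC_scaleC)
  also have "(-w) * (1/w) = -1" using assms by simp
  finally show ?thesis by (simp add: sC_minus_l scaleC_one)
qed

lemma sc_lemma': "w \<noteq> 0 \<Longrightarrow> scaleC (-(1/w)) (x - scaleC w y) = y - scaleC (1/w) (x::'a::complex_vector)"
  using sc_lemma[of "1/w" x y] by simp

lemma idI3:
  assumes bL: "bop L" and LT: "L \<circ> T = id" and w: "w \<noteq> 0"
  shows "shift_op L w x = scaleC (-w) (L (shift_op T (1/w) x))"
proof -
  have "L (shift_op T (1/w) x) = x - scaleC (1/w) (L x)"
    using LT bopD[OF bL] unfolding shift_op_def comp_id_iff by simp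
  thus ?thesis by (simp add: shift_op_def sc_lemma[OF w])
qed

theorem theorem4p1:
  fixes T L :: "'a::chilbert_space \<Rightarrow> 'a"
  assumes "bop T" and "bop L"
    and "left_invertible T"
    and "L \<circ> T = id"
  shows "(0 \<in> op_spectrum T \<longrightarrow>
            {z. Some z \<notin> phi ` Some ` left_spectrum L}
              \<subseteq> right_spectrum T - left_spectrum T)
       \<and> (0 \<notin> op_spectrum T \<longrightarrow>
            phi ` Some ` op_spectrum L = Some ` op_spectrum T)
       \<and> 0 \<notin> frontier (op_spectrum L)
       \<and> phi ` Some ` frontier (op_spectrum L) \<subseteq> Some ` right_spectrum T"
proof -
  note bT = assms(1) and bL = assms(2) and liT = assms(3) and LT = assms(4)
  have LT': "L (T x) = x" for x using LT unfolding comp_id_iff by blast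
  have P3: "0 \<notin> frontier (op_spectrum L)"
  proof (rule right_inv_not_frontier[OF bL])
    show "right_invertible (shift_op L 0)"
      unfolding right_invertible_def using bT LT by auto
  qed
  have P1: "{z. Some z \<notin> phi ` Some ` left_spectrum L} \<subseteq> right_spectrum T - left_spectrum T"
    if s0: "0 \<in> op_spectrum T"
  proof
    fix z assume "z \<in> {z. Some z \<notin> phi ` Some ` left_spectrum L}"
    hence zn: "Some z \<notin> phi ` Some ` left_spectrum L" by simp
    have nT: "\<not> op_invertible T" using s0 by (simp add: op_spectrum_def)
    show "z \<in> right_spectrum T - left_spectrum T"
    proof (cases "z = 0")
      case True
      have "\<not> right_invertible T"
      proof
        assume "right_invertible T"
        then obtain B where "bop B" "T \<circ> B = id" unfolding right_invertible_def by blast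
        hence "op_invertible T" using inv_two_sided LT by blast
        thus False using nT by simp
      qed
      thus ?thesis using True liT by (simp add: right_spectrum_def left_spectrum_def)
    next
      case False
      define w where "w = 1 / z"
      have w0: "w \<noteq> 0" and zw: "1 / w = z" using False by (auto simp: w_def)
      have "w \<notin> left_spectrum L"
      proof
        assume "w \<in> left_spectrum L"
        hence "phi (Some w) \<in> phi ` Some ` left_spectrum L" by blast
        thus False using zn w0 zw by simp
      qed
      then obtain M where bM: "bop M" and M1: "\<forall>x. M (shift_op L w x) = x"
        unfolding left_spectrum_def left_invertible_def comp_id_iff by blast
      define A where "A = shift_op T z"
      have bA: "bop A" unfolding A_def by (rule bop_shift[OF bT])
      have I3: "shift_op L w x = scaleC (-w) (L (A x))" for x
        using idI3[OF bL LT w0] zw by (simp add: A_def)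
      define N where "N = (\<lambda>y. M (scaleC (-w) (L y)))"
      have bN: "bop N" unfolding N_def by (rule bop_comp'[OF bM bop_comp'[OF bop_scale bL]])
      have NA: "N \<circ> A = id" unfolding comp_id_iff N_def using M1 I3 by simp
      have liA: "left_invertible A" unfolding left_invertible_def using bN NA by blast
      have riA: "\<not> right_invertible A"
      proof
        assume "right_invertible A"
        then obtain R where bR: "bop R" and AR: "A \<circ> R = id" unfolding right_invertible_def by blast
        have AR': "A (R x) = x" for x using AR unfolding comp_id_iff by blast
        have NR: "N = R"
        proof
          fix x have "N (A (R x)) = R x" using NA unfolding comp_id_iff by blast
          thus "N x = R x" by (simp add: AR')
        qed
        have RA: "R \<circ> A = id" using NA NR by simp
        have iR: "op_invertible R" by (rule inv_two_sided[OF bA AR RA])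
        define L' where "L' = shift_op L w"
        have bL': "bop L'" unfolding L'_def by (rule bop_shift[OF bL])
        have iL': "op_invertible L'"
        proof (rule inv_two_sided[of "\<lambda>y. R (T (scaleC (-(1/w)) y))" M])
          show "bop (\<lambda>y. R (T (scaleC (-(1/w)) y)))"
            by (rule bop_comp'[OF bR bop_comp'[OF bT bop_scale]])
          show "M \<circ> L' = id" using M1 unfolding L'_def comp_id_iff by blast
          show "L' \<circ> (\<lambda>y. R (T (scaleC (- (1 / w)) y))) = id"
            unfolding comp_id_iff L'_def I3 using AR' LT' w0
            by (simp add: scaleC_scaleC scaleC_one)
        qed
        have "(\<lambda>x. scaleC (-z) x) \<circ> (L' \<circ> R) = L"
        proof
          fix x
          have "L' (R x) = scaleC (-w) (L x)" unfolding L'_def I3 AR' ..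
          thus "((\<lambda>x. scaleC (-z) x) \<circ> (L' \<circ> R)) x = L x"
            using zw w0 by (simp add: scaleC_scaleC scaleC_one field_simps)
        qed
        moreover have "op_invertible ((\<lambda>x. scaleC (-z) x) \<circ> (L' \<circ> R))"
          using False by (intro inv_comp inv_scale iL' iR) simp
        ultimately have "op_invertible L" by simp
        hence "op_invertible T" by (rule inv_left_inv[OF bL LT])
        thus False using nT by simp
      qed
      show ?thesis using liA riA
        by (simp add: A_def right_spectrum_def left_spectrum_def)
    qed
  qed
  have P2: "phi ` Some ` op_spectrum L = Some ` op_spectrum T" if s0: "0 \<notin> op_spectrum T"
  proof -
    have iT: "op_invertible T" using s0 by (simp add: op_spectrum_def)
    then obtain B where "\<forall>x. B (T x) = x" "\<forall>x. T (B x) = x"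
      unfolding op_invertible_def comp_id_iff by blast
    hence TL': "T (L x) = x" for x using LT' by (metis (no_types))
    have iL: "op_invertible L"
      unfolding op_invertible_def comp_id_iff using bT LT' TL' by blast
    have L0: "0 \<notin> op_spectrum L" using iL by (simp add: op_spectrum_def)
    have eq: "w \<in> op_spectrum L \<longleftrightarrow> 1 / w \<in> op_spectrum T" if w0: "w \<noteq> 0" for w
    proof -
      have e1: "shift_op L w = (\<lambda>x. scaleC (-w) x) \<circ> (L \<circ> shift_op T (1/w))"
        using idI3[OF bL LT w0] by (simp add: fun_eq_iff)
      have e2: "shift_op T (1/w) = (\<lambda>x. scaleC (-(1/w)) x) \<circ> (T \<circ> shift_op L w)"
      proof
        fix x
        have "T (shift_op L w x) = x - scaleC w (T x)"
          using TL' bopD[OF bT] by (simp add: shift_op_def)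
        thus "shift_op T (1/w) x = ((\<lambda>x. scaleC (-(1/w)) x) \<circ> (T \<circ> shift_op L w)) x"
          by (simp add: shift_op_def sc_lemma'[OF w0])
      qed
      have "op_invertible (shift_op L w) \<longleftrightarrow> op_invertible (shift_op T (1/w))"
      proof
        assume "op_invertible (shift_op L w)"
        thus "op_invertible (shift_op T (1/w))" unfolding e2
          using w0 by (intro inv_comp inv_scale iT) simp_all
      next
        assume "op_invertible (shift_op T (1/w))"
        thus "op_invertible (shift_op L w)" unfolding e1
          using w0 by (intro inv_comp inv_scale iL) simp_all
      qed
      thus ?thesis by (simp add: op_spectrum_def)
    qed
    show ?thesis
    proof
      show "phi ` Some ` op_spectrum L \<subseteq> Some ` op_spectrum T"
      proof
        fix x assume "x \<in> phi ` Some ` op_spectrum L"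
        then obtain w where w: "w \<in> op_spectrum L" "x = phi (Some w)" by blast
        have w0: "w \<noteq> 0" using w L0 by auto
        show "x \<in> Some ` op_spectrum T" using w w0 eq[OF w0] by simp
      qed
    next
      show "Some ` op_spectrum T \<subseteq> phi ` Some ` op_spectrum L"
      proof
        fix x assume "x \<in> Some ` op_spectrum T"
        then obtain z where z: "z \<in> op_spectrum T" "x = Some z" by blast
        have z0: "z \<noteq> 0" using z s0 by auto
        have "1/z \<in> op_spectrum L" using eq[of "1/z"] z z0 by simp
        moreover have "phi (Some (1/z)) = x" using z z0 by simp
        ultimately show "x \<in> phi ` Some ` op_spectrum L" by blast
      qed
    qed
  qed
  have P4: "phi ` Some ` frontier (op_spectrum L) \<subseteq> Some ` right_spectrum T"
  proof
    fix x assume "x \<in> phi ` Some ` frontier (op_spectrum L)"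
    then obtain w where w: "w \<in> frontier (op_spectrum L)" "x = phi (Some w)" by blast
    have w0: "w \<noteq> 0" using w P3 by auto
    have "1 / w \<in> right_spectrum T"
    proof (rule ccontr)
      assume "1 / w \<notin> right_spectrum T"
      then obtain R where bR: "bop R" and R1: "\<forall>x. shift_op T (1/w) (R x) = x"
        unfolding right_spectrum_def right_invertible_def comp_id_iff by blast
      have "right_invertible (shift_op L w)"
        unfolding right_invertible_def comp_id_iff
      proof (intro exI conjI allI)
        show "bop (\<lambda>y. R (T (scaleC (-(1/w)) y)))"
          by (rule bop_comp'[OF bR bop_comp'[OF bT bop_scale]])
        fix y show "shift_op L w (R (T (scaleC (-(1/w)) y))) = y"
          unfolding idI3[OF bL LT w0] using R1 LT' w0
          by (simp add: scaleC_scaleC scaleC_one)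
      qed
      thus False using right_inv_not_frontier[OF bL] w by blast
    qed
    thus "x \<in> Some ` right_spectrum T" using w w0 by simp
  qed
  show ?thesis using P1 P2 P3 P4 by blast
qed

end
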